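(* Let $\mathfrak{g}_\alpha$, $-1\le\alpha\le1$, be the eight-dimensional real Lie algebras with basis $\{X_1,\dots,X_8\}$ and nonzero brackets $[X_1,X_2]=2X_2$, $[X_1,X_3]=-2X_3$, $[X_2,X_3]=X_1$, $[X_1,X_4]=X_4$, $[X_1,X_5]=-X_5$, $[X_1,X_6]=X_6$, $[X_1,X_7]=-X_7$, $[X_2,X_5]=X_4$, $[X_2,X_7]=X_6$, $[X_3,X_4]=X_5$, $[X_3,X_6]=X_7$, $[X_4,X_8]=X_4$, $[X_5,X_8]=X_5$, $[X_6,X_8]=\alpha X_6$, $[X_7,X_8]=\alpha X_7$, and let $b_2(\mathfrak{g})=\dim H^2(\mathfrak{g},\mathbb{R})$. Then: (i) for $\alpha\ne-1,0$, the (linear) deformations $\mathfrak{g}_{-1}\to\mathfrak{g}_\alpha$ decrease $b_2$ by one, i.e. $b_2(\mathfrak{g}_\alpha)=b_2(\mathfrak{g}_{-1})-1$; (ii) for $\alpha\ne-1,0$ and $\beta\in\{0,-1\}$, the (linear) deformations $\mathfrak{g}_\alpha\to\mathfrak{g}_\beta$ increase $b_2$ by one, i.e. $b_2(\mathfrak{g}_\beta)=b_2(\mathfrak{g}_\alpha)+1$; (iii) the (linear) deformation $\mathfrak{g}_{-1}\to\mathfrak{g}_0$ preserves $b_2$, i.e. $b_2(\mathfrak{g}_0)=b_2(\mathfrak{g}_{-1})$.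
   Context: $H^2(\mathfrak{g},\mathbb{R})$ denotes the second Lie algebra cohomology of $\mathfrak{g}$ with coefficients in the trivial module $\mathbb{R}$. A linear deformation $\mathfrak{g}\to\mathfrak{h}$ means that $\mathfrak{h}$ is isomorphic to a Lie algebra with bracket $[X,Y]+t\varphi(X,Y)$ on the underlying space of $\mathfrak{g}$, for a scalar $t$ and an integrable 2-cocycle $\varphi$ of $\mathfrak{g}$ with values in the adjoint module; for this family, $\mathfrak{g}_\alpha+\varepsilon\varphi$ with $\varphi(X_6,X_8)=X_6$, $\varphi(X_7,X_8)=X_7$ yields $\mathfrak{g}_{\alpha+\varepsilon}$. *)

theory Defs
  imports "HOL-Analysis.Analysis"
begin

definition idx :: "nat \<Rightarrow> 8" where
  "idx k = of_nat (k - 1)"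

definition X :: "nat \<Rightarrow> real^8" where
  "X k = axis (idx k) 1"

definition upbr :: "real \<Rightarrow> nat \<Rightarrow> nat \<Rightarrow> real^8" where
  "upbr \<alpha> i j =
    (if (i, j) = (1, 2) then 2 *\<^sub>R X 2
     else if (i, j) = (1, 3) then (-2) *\<^sub>R X 3
     else if (i, j) = (2, 3) then X 1
     else if (i, j) = (1, 4) then X 4
     else if (i, j) = (1, 5) then - X 5
     else if (i, j) = (1, 6) then X 6
     else if (i, j) = (1, 7) then - X 7
     else if (i, j) = (2, 5) then X 4
     else if (i, j) = (2, 7) then X 6
     else if (i, j) = (3, 4) then X 5
     else if (i, j) = (3, 6) then X 7
     else if (i, j) = (4, 8) then X 4
     else if (i, j) = (5, 8) then X 5
     else if (i, j) = (6, 8) then \<alpha> *\<^sub>R X 6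
     else if (i, j) = (7, 8) then \<alpha> *\<^sub>R X 7
     else 0)"

definition basis_bracket :: "real \<Rightarrow> nat \<Rightarrow> nat \<Rightarrow> real^8" where
  "basis_bracket \<alpha> i j =
    (if i < j then upbr \<alpha> i j else if j < i then - upbr \<alpha> j i else 0)"

definition lie_bracket :: "real \<Rightarrow> real^8 \<Rightarrow> real^8 \<Rightarrow> real^8" where
  "lie_bracket \<alpha> u v =
    (\<Sum>i\<in>{1..8}. \<Sum>j\<in>{1..8}. (u $ idx i * v $ idx j) *\<^sub>R basis_bracket \<alpha> i j)"

text \<open>Bilinear forms on real^8 are represented by matrices M, via
  form M u v = u . (M v).  This is a linear bijection.\<close>

definition form :: "real^8^8 \<Rightarrow> real^8 \<Rightarrow> real^8 \<Rightarrow> real" where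
  "form M u v = u \<bullet> (M *v v)"

definition cocycles2 :: "real \<Rightarrow> (real^8^8) set" where
  "cocycles2 \<alpha> = {M. (\<forall>u v. form M u v = - form M v u) \<and>
     (\<forall>u v w. form M (lie_bracket \<alpha> u v) w + form M (lie_bracket \<alpha> v w) u
              + form M (lie_bracket \<alpha> w u) v = 0)}"

definition coboundaries2 :: "real \<Rightarrow> (real^8^8) set" where
  "coboundaries2 \<alpha> = {M. \<exists>f :: real^8. \<forall>u v. form M u v = f \<bullet> lie_bracket \<alpha> u v}"

definition b2 :: "real \<Rightarrow> nat" where
  "b2 \<alpha> = dim (cocycles2 \<alpha>) - dim (coboundaries2 \<alpha>)"

end

theory Submission
  imports Defs
begin

lemma idx_vals[simp]: "idx 1 = 0" "idx 2 = 1" "idx 3 = 2" "idx 4 = 3"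
  "idx 5 = 4" "idx 6 = 5" "idx 7 = 6" "idx 8 = 7"
  by (simp_all add: idx_def)

lemma set18: "{1..8::nat} = {1,2,3,4,5,6,7,8}" by auto

lemma idx_inj: "inj_on idx {1..8}"
  unfolding inj_on_def set18 by (auto simp: idx_def)

lemma exhaust_8:
  fixes x :: 8
  shows "x = 0 \<or> x = 1 \<or> x = 2 \<or> x = 3 \<or> x = 4 \<or> x = 5 \<or> x = 6 \<or> x = 7"
proof (induct x)
  case (of_int z)
  then have "z = 0 \<or> z = 1 \<or> z = 2 \<or> z = 3 \<or> z = 4 \<or> z = 5 \<or> z = 6 \<or> z = 7" by fastforce
  then show ?case by auto
qed

lemma idx_surj: "idx ` {1..8} = UNIV"
proof -
  have "x \<in> idx ` {1..8}" for x :: 8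
    using exhaust_8[of x] unfolding set18 by (auto simp flip: idx_vals)
  then show ?thesis by auto
qed

lemma sum8: "sum g (UNIV::8 set) = (\<Sum>k\<in>{1..8}. g (idx k))"
proof -
  have "sum g (idx ` {1..8}) = sum (g \<circ> idx) {1..8}" by (rule sum.reindex[OF idx_inj])
  then show ?thesis by (simp only: idx_surj comp_def)
qed

lemma Xcomp: "i\<in>{1..8} \<Longrightarrow> j\<in>{1..8} \<Longrightarrow> X i $ idx j = (if i = j then 1 else 0)"
  unfolding X_def using inj_onD[OF idx_inj] by (auto simp: axis_def)

lemma vec_expand: "(u::real^8) = (\<Sum>k\<in>{1..8}. (u $ idx k) *\<^sub>R X k)"
proof (subst vec_eq_iff, rule allI)
  fix a :: 8
  obtain j where j: "j \<in> {1..8}" "a = idx j" using idx_surj by blast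
  have "(\<Sum>k\<in>{1..8}. (u $ idx k) *\<^sub>R X k) $ a = (\<Sum>k\<in>{1..8}. u $ idx k * (if k = j then 1 else 0))"
    using j by (auto simp: Xcomp intro!: sum.cong)
  also have "\<dots> = u $ a" using j by (simp add: if_distrib cong: if_cong)
  finally show "u $ a = (\<Sum>k\<in>{1..8}. (u $ idx k) *\<^sub>R X k) $ a" by simp
qed

lemma form_sum_left: "form M (\<Sum>k\<in>A. c k *\<^sub>R x k) v = (\<Sum>k\<in>A. c k * form M (x k) v)"
  unfolding form_def by (simp add: inner_sum_left)

lemma form_sum_right: "form M u (\<Sum>k\<in>A. c k *\<^sub>R x k) = (\<Sum>k\<in>A. c k * form M u (x k))"
proof -
  have "M *v (\<Sum>k\<in>A. c k *\<^sub>R x k) = (\<Sum>k\<in>A. c k *\<^sub>R (M *v x k))"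
    by (simp add: linear_sum[OF matrix_vector_mul_linear] linear_scale[OF matrix_vector_mul_linear])
  then show ?thesis unfolding form_def by (simp add: inner_sum_right)
qed

lemma form_expand_right: "form M u v = (\<Sum>j\<in>{1..8}. v $ idx j * form M u (X j))"
  by (subst vec_expand[of v]) (rule form_sum_right)

lemma form_expand: "form M u v = (\<Sum>i\<in>{1..8}. \<Sum>j\<in>{1..8}. u $ idx i * v $ idx j * form M (X i) (X j))"
  apply (subst vec_expand[of u])
  apply (subst form_sum_left)
  apply (subst form_expand_right)
  apply (simp add: sum_distrib_left mult.assoc)
  done

lemma form_scale_left[simp]: "form M (c *\<^sub>R x) v = c * form M x v"
  unfolding form_def by simp
lemma form_neg_left[simp]: "form M (- x) v = - form M x v"
  unfolding form_def by simp
lemma form_zero_left[simp]: "form M 0 v = 0"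
  unfolding form_def by simp
lemma form_add_matrix: "form (M + N) u v = form M u v + form N u v"
  unfolding form_def by (simp add: matrix_vector_mult_add_rdistrib inner_add_right)
lemma form_scale_matrix: "form (c *\<^sub>R M) u v = c * form M u v"
  unfolding form_def by (simp flip: scaleR_matrix_vector_assoc)
lemma form_XX: "i\<in>{1..8} \<Longrightarrow> j\<in>{1..8} \<Longrightarrow> form M (X i) (X j) = M $ idx i $ idx j"
  unfolding form_def X_def by (simp add: inner_axis' matrix_vector_mul_component inner_axis)

lemma lb_XX: "i\<in>{1..8} \<Longrightarrow> j\<in>{1..8} \<Longrightarrow> lie_bracket \<alpha> (X i) (X j) = basis_bracket \<alpha> i j"
proof -
  assume i: "i\<in>{1..8}" and j: "j\<in>{1..8}"
  have "lie_bracket \<alpha> (X i) (X j) = (\<Sum>a\<in>{1..8}. \<Sum>b\<in>{1..8}. ((if i = a then 1 else 0) * (if j = b then 1 else 0)) *\<^sub>R basis_bracket \<alpha> a b)"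
    unfolding lie_bracket_def
    apply (rule sum.cong[OF refl])+
    using i j by (simp add: Xcomp)
  also have "\<dots> = (\<Sum>a\<in>{1..8}. \<Sum>b\<in>{1..8}. if j = b then (if i = a then basis_bracket \<alpha> i j else 0) else 0)"
    by (rule sum.cong[OF refl])+ auto
  also have "\<dots> = basis_bracket \<alpha> i j" using i j by (simp add: sum.delta sum.delta')
  finally show ?thesis .
qed


lemma form_sum_left': "form M (\<Sum>k\<in>A. x k) v = (\<Sum>k\<in>A. form M (x k) v)"
  unfolding form_def by (simp add: inner_sum_left)

lemma form_entries: "form M u v = (\<Sum>i\<in>{1..8}. \<Sum>j\<in>{1..8}. u $ idx i * v $ idx j * M $ idx i $ idx j)"
  by (subst form_expand) (simp add: form_XX)

lemma T_expand: "form M (lie_bracket \<alpha> u v) w =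
  (\<Sum>i\<in>{1..8}. \<Sum>j\<in>{1..8}. \<Sum>k\<in>{1..8}. u $ idx i * v $ idx j * w $ idx k * form M (basis_bracket \<alpha> i j) (X k))"
  unfolding lie_bracket_def form_sum_left' form_scale_left
  by (subst form_expand_right) (simp add: sum_distrib_left mult.assoc)

lemma swap_inner: "(\<Sum>i\<in>A. \<Sum>j\<in>B. \<Sum>k\<in>C. g i j k) = (\<Sum>i\<in>A. \<Sum>k\<in>C. \<Sum>j\<in>B. g i j k)"
  by (rule sum.cong[OF refl]) (rule sum.swap)

lemma cocycle_basis:
  assumes anti: "\<forall>i\<in>{1..8}. \<forall>j\<in>{1..8}. M $ idx i $ idx j = - M $ idx j $ idx i"
  and cyc: "\<forall>i\<in>{1..8}. \<forall>j\<in>{1..8}. \<forall>k\<in>{1..8}.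
     form M (basis_bracket \<alpha> i j) (X k) + form M (basis_bracket \<alpha> j k) (X i)
     + form M (basis_bracket \<alpha> k i) (X j) = 0"
  shows "M \<in> cocycles2 \<alpha>"
proof -
  have A: "form M u v = - form M v u" for u v
  proof -
    have "form M v u = (\<Sum>i\<in>{1..8}. \<Sum>j\<in>{1..8}. v $ idx i * u $ idx j * M $ idx i $ idx j)"
      by (rule form_entries)
    also have "\<dots> = (\<Sum>j\<in>{1..8}. \<Sum>i\<in>{1..8}. v $ idx i * u $ idx j * M $ idx i $ idx j)"
      by (rule sum.swap)
    also have "\<dots> = (\<Sum>j\<in>{1..8}. \<Sum>i\<in>{1..8}. - (u $ idx j * v $ idx i * M $ idx j $ idx i))"
      apply (intro sum.cong refl)
      subgoal for j i using anti[rule_format, of i j] by (simp del: vector_minus_component)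
      done
    also have "\<dots> = - form M u v"
      by (simp add: form_entries sum_negf)
    finally show ?thesis by simp
  qed
  define F where "F i j k = form M (basis_bracket \<alpha> i j) (X k)" for i j k
  have C: "form M (lie_bracket \<alpha> u v) w + form M (lie_bracket \<alpha> v w) u + form M (lie_bracket \<alpha> w u) v = 0" for u v w
  proof -
    let ?G = "\<lambda>a b c. u $ idx a * v $ idx b * w $ idx c"
    have 1: "form M (lie_bracket \<alpha> u v) w = (\<Sum>a\<in>{1..8}. \<Sum>b\<in>{1..8}. \<Sum>c\<in>{1..8}. ?G a b c * F a b c)"
      unfolding T_expand F_def ..
    have "form M (lie_bracket \<alpha> v w) u = (\<Sum>i\<in>{1..8}. \<Sum>j\<in>{1..8}. \<Sum>k\<in>{1..8}. ?G k i j * F i j k)"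
      unfolding T_expand F_def by (intro sum.cong refl) (simp only: ac_simps)
    also have "\<dots> = (\<Sum>i\<in>{1..8}. \<Sum>k\<in>{1..8}. \<Sum>j\<in>{1..8}. ?G k i j * F i j k)"
      by (rule swap_inner)
    also have "\<dots> = (\<Sum>k\<in>{1..8}. \<Sum>i\<in>{1..8}. \<Sum>j\<in>{1..8}. ?G k i j * F i j k)"
      by (rule sum.swap)
    finally have 2: "form M (lie_bracket \<alpha> v w) u = (\<Sum>a\<in>{1..8}. \<Sum>b\<in>{1..8}. \<Sum>c\<in>{1..8}. ?G a b c * F b c a)" .
    have "form M (lie_bracket \<alpha> w u) v = (\<Sum>i\<in>{1..8}. \<Sum>j\<in>{1..8}. \<Sum>k\<in>{1..8}. ?G j k i * F i j k)"
      unfolding T_expand F_def by (intro sum.cong refl) (simp only: ac_simps)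
    also have "\<dots> = (\<Sum>j\<in>{1..8}. \<Sum>i\<in>{1..8}. \<Sum>k\<in>{1..8}. ?G j k i * F i j k)"
      by (rule sum.swap)
    also have "\<dots> = (\<Sum>j\<in>{1..8}. \<Sum>k\<in>{1..8}. \<Sum>i\<in>{1..8}. ?G j k i * F i j k)"
      by (rule swap_inner)
    finally have 3: "form M (lie_bracket \<alpha> w u) v = (\<Sum>a\<in>{1..8}. \<Sum>b\<in>{1..8}. \<Sum>c\<in>{1..8}. ?G a b c * F c a b)" .
    have "form M (lie_bracket \<alpha> u v) w + form M (lie_bracket \<alpha> v w) u + form M (lie_bracket \<alpha> w u) v
       = (\<Sum>a\<in>{1..8}. \<Sum>b\<in>{1..8}. \<Sum>c\<in>{1..8}. ?G a b c * (F a b c + F b c a + F c a b))"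
      unfolding 1 2 3 by (simp add: sum.distrib distrib_left)
    also have "\<dots> = 0"
      using cyc unfolding F_def by (intro sum.neutral ballI) simp
    finally show ?thesis .
  qed
  show ?thesis unfolding cocycles2_def using A C by blast
qed


lemma lb_scale_left[simp]: "lie_bracket \<alpha> (c *\<^sub>R x) y = c *\<^sub>R lie_bracket \<alpha> x y"
  unfolding lie_bracket_def by (simp add: scaleR_sum_right mult.assoc)
lemma lb_neg_left[simp]: "lie_bracket \<alpha> (- x) y = - lie_bracket \<alpha> x y"
  unfolding lie_bracket_def by (simp add: sum_negf)
lemma lb_zero_left[simp]: "lie_bracket \<alpha> 0 y = 0"
  unfolding lie_bracket_def by simp

lemma in18: "(1::nat) \<in> {1..8}" "(2::nat) \<in> {1..8}" "(3::nat) \<in> {1..8}" "(4::nat) \<in> {1..8}"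
  "(5::nat) \<in> {1..8}" "(6::nat) \<in> {1..8}" "(7::nat) \<in> {1..8}" "(8::nat) \<in> {1..8}"
  by auto

lemma bb_tab[simp]:
  "basis_bracket \<alpha> 1 1 = 0"
  "basis_bracket \<alpha> 1 2 = 2 *\<^sub>R X 2"
  "basis_bracket \<alpha> 1 3 = (-2) *\<^sub>R X 3"
  "basis_bracket \<alpha> 1 4 = X 4"
  "basis_bracket \<alpha> 1 5 = - X 5"
  "basis_bracket \<alpha> 1 6 = X 6"
  "basis_bracket \<alpha> 1 7 = - X 7"
  "basis_bracket \<alpha> 1 8 = 0"
  "basis_bracket \<alpha> 2 1 = (-2) *\<^sub>R X 2"
  "basis_bracket \<alpha> 2 2 = 0"
  "basis_bracket \<alpha> 2 3 = X 1"
  "basis_bracket \<alpha> 2 4 = 0"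
  "basis_bracket \<alpha> 2 5 = X 4"
  "basis_bracket \<alpha> 2 6 = 0"
  "basis_bracket \<alpha> 2 7 = X 6"
  "basis_bracket \<alpha> 2 8 = 0"
  "basis_bracket \<alpha> 3 1 = 2 *\<^sub>R X 3"
  "basis_bracket \<alpha> 3 2 = - X 1"
  "basis_bracket \<alpha> 3 3 = 0"
  "basis_bracket \<alpha> 3 4 = X 5"
  "basis_bracket \<alpha> 3 5 = 0"
  "basis_bracket \<alpha> 3 6 = X 7"
  "basis_bracket \<alpha> 3 7 = 0"
  "basis_bracket \<alpha> 3 8 = 0"
  "basis_bracket \<alpha> 4 1 = - X 4"
  "basis_bracket \<alpha> 4 2 = 0"
  "basis_bracket \<alpha> 4 3 = - X 5"
  "basis_bracket \<alpha> 4 4 = 0"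
  "basis_bracket \<alpha> 4 5 = 0"
  "basis_bracket \<alpha> 4 6 = 0"
  "basis_bracket \<alpha> 4 7 = 0"
  "basis_bracket \<alpha> 4 8 = X 4"
  "basis_bracket \<alpha> 5 1 = X 5"
  "basis_bracket \<alpha> 5 2 = - X 4"
  "basis_bracket \<alpha> 5 3 = 0"
  "basis_bracket \<alpha> 5 4 = 0"
  "basis_bracket \<alpha> 5 5 = 0"
  "basis_bracket \<alpha> 5 6 = 0"
  "basis_bracket \<alpha> 5 7 = 0"
  "basis_bracket \<alpha> 5 8 = X 5"
  "basis_bracket \<alpha> 6 1 = - X 6"
  "basis_bracket \<alpha> 6 2 = 0"
  "basis_bracket \<alpha> 6 3 = - X 7"
  "basis_bracket \<alpha> 6 4 = 0"
  "basis_bracket \<alpha> 6 5 = 0"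
  "basis_bracket \<alpha> 6 6 = 0"
  "basis_bracket \<alpha> 6 7 = 0"
  "basis_bracket \<alpha> 6 8 = \<alpha> *\<^sub>R X 6"
  "basis_bracket \<alpha> 7 1 = X 7"
  "basis_bracket \<alpha> 7 2 = - X 6"
  "basis_bracket \<alpha> 7 3 = 0"
  "basis_bracket \<alpha> 7 4 = 0"
  "basis_bracket \<alpha> 7 5 = 0"
  "basis_bracket \<alpha> 7 6 = 0"
  "basis_bracket \<alpha> 7 7 = 0"
  "basis_bracket \<alpha> 7 8 = \<alpha> *\<^sub>R X 7"
  "basis_bracket \<alpha> 8 1 = 0"
  "basis_bracket \<alpha> 8 2 = 0"
  "basis_bracket \<alpha> 8 3 = 0"
  "basis_bracket \<alpha> 8 4 = - X 4"
  "basis_bracket \<alpha> 8 5 = - X 5"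
  "basis_bracket \<alpha> 8 6 = (- \<alpha>) *\<^sub>R X 6"
  "basis_bracket \<alpha> 8 7 = (- \<alpha>) *\<^sub>R X 7"
  "basis_bracket \<alpha> 8 8 = 0"
  by (simp_all add: basis_bracket_def upbr_def)
lemma bb_tab1[simp]:
  "basis_bracket \<alpha> (Suc 0) (Suc 0) = 0"
  "basis_bracket \<alpha> (Suc 0) (2) = 2 *\<^sub>R X 2"
  "basis_bracket \<alpha> (Suc 0) (3) = (-2) *\<^sub>R X 3"
  "basis_bracket \<alpha> (Suc 0) (4) = X 4"
  "basis_bracket \<alpha> (Suc 0) (5) = - X 5"
  "basis_bracket \<alpha> (Suc 0) (6) = X 6"
  "basis_bracket \<alpha> (Suc 0) (7) = - X 7"
  "basis_bracket \<alpha> (Suc 0) (8) = 0"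
  "basis_bracket \<alpha> (2) (Suc 0) = (-2) *\<^sub>R X 2"
  "basis_bracket \<alpha> (3) (Suc 0) = 2 *\<^sub>R X 3"
  "basis_bracket \<alpha> (4) (Suc 0) = - X 4"
  "basis_bracket \<alpha> (5) (Suc 0) = X 5"
  "basis_bracket \<alpha> (6) (Suc 0) = - X 6"
  "basis_bracket \<alpha> (7) (Suc 0) = X 7"
  "basis_bracket \<alpha> (8) (Suc 0) = 0"
  by (simp_all add: basis_bracket_def upbr_def)

lemma idx_Suc0[simp]: "idx (Suc 0) = 0" by (simp add: idx_def)
lemma in18_Suc0[simp]: "Suc 0 \<in> {1..8}" by simp

lemma inner_X[simp]: "f \<bullet> X a = f $ idx a"
  unfolding X_def by (simp add: inner_axis)

lemma cob_cyc:
  "\<forall>i\<in>{1..8}. \<forall>j\<in>{1..8}. \<forall>k\<in>{1..8}. f \<bullet> lie_bracket \<alpha> (basis_bracket \<alpha> i j) (X k) + f \<bullet> lie_bracket \<alpha> (basis_bracket \<alpha> j k) (X i)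
     + f \<bullet> lie_bracket \<alpha> (basis_bracket \<alpha> k i) (X j) = 0"
  unfolding set18 ball_simps
  by (simp add: lb_XX in18)

lemma bb_anti: "basis_bracket \<alpha> j i = - basis_bracket \<alpha> i j"
  unfolding basis_bracket_def by auto

lemma cob_basis:
  assumes h: "\<forall>i\<in>{1..8}. \<forall>j\<in>{1..8}. form N (X i) (X j) = f \<bullet> basis_bracket \<alpha> i j"
  shows "N \<in> coboundaries2 \<alpha>"
proof -
  have "form N u v = f \<bullet> lie_bracket \<alpha> u v" for u v
  proof -
    have "form N u v = (\<Sum>i\<in>{1..8}. \<Sum>j\<in>{1..8}. u $ idx i * v $ idx j * (f \<bullet> basis_bracket \<alpha> i j))"
      unfolding form_expand[of N u v] using h by (intro sum.cong refl) simp
    also have "\<dots> = f \<bullet> lie_bracket \<alpha> u v"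
      unfolding lie_bracket_def by (simp add: inner_sum_right)
    finally show ?thesis .
  qed
  then show ?thesis unfolding coboundaries2_def by blast
qed

lemma B_sub_Z: "coboundaries2 \<alpha> \<subseteq> cocycles2 \<alpha>"
proof
  fix M assume "M \<in> coboundaries2 \<alpha>"
  then obtain f where h: "\<And>u v. form M u v = f \<bullet> lie_bracket \<alpha> u v"
    unfolding coboundaries2_def by blast
  show "M \<in> cocycles2 \<alpha>"
  proof (rule cocycle_basis)
    show "\<forall>i\<in>{1..8}. \<forall>j\<in>{1..8}. M $ idx i $ idx j = - M $ idx j $ idx i"
    proof (intro ballI)
      fix i j :: nat assume i: "i \<in> {1..8}" and j: "j \<in> {1..8}"
      have "M $ idx i $ idx j = f \<bullet> basis_bracket \<alpha> i j"
        using i j by (simp add: form_XX[symmetric] h lb_XX)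
      moreover have "M $ idx j $ idx i = f \<bullet> basis_bracket \<alpha> j i"
        using i j by (simp add: form_XX[symmetric] h lb_XX)
      ultimately show "M $ idx i $ idx j = - M $ idx j $ idx i"
        by (simp add: bb_anti[of \<alpha> j i])
    qed
    show "\<forall>i\<in>{1..8}. \<forall>j\<in>{1..8}. \<forall>k\<in>{1..8}.
     form M (basis_bracket \<alpha> i j) (X k) + form M (basis_bracket \<alpha> j k) (X i)
     + form M (basis_bracket \<alpha> k i) (X j) = 0"
      unfolding h by (rule cob_cyc)
  qed
qed

lemma form_zero_matrix[simp]: "form 0 u v = 0"
  unfolding form_def by simp

lemma subspace_B: "subspace (coboundaries2 \<alpha>)"
  unfolding subspace_def
proof (intro conjI allI impI ballI)
  show "0 \<in> coboundaries2 \<alpha>"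
    unfolding coboundaries2_def by (auto intro!: exI[of _ 0])
next
  fix M N assume "M \<in> coboundaries2 \<alpha>" "N \<in> coboundaries2 \<alpha>"
  then obtain f g where "\<forall>u v. form M u v = f \<bullet> lie_bracket \<alpha> u v" "\<forall>u v. form N u v = g \<bullet> lie_bracket \<alpha> u v"
    unfolding coboundaries2_def by blast
  then show "M + N \<in> coboundaries2 \<alpha>"
    unfolding coboundaries2_def by (auto simp: form_add_matrix inner_add_left intro!: exI[of _ "f + g"])
next
  fix c :: real and M assume "M \<in> coboundaries2 \<alpha>"
  then obtain f where "\<forall>u v. form M u v = f \<bullet> lie_bracket \<alpha> u v" unfolding coboundaries2_def by blast
  then show "c *\<^sub>R M \<in> coboundaries2 \<alpha>"
    unfolding coboundaries2_def by (auto simp: form_scale_matrix intro!: exI[of _ "c *\<^sub>R f"])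
qed

lemma Z_iff: "M \<in> cocycles2 \<alpha> \<longleftrightarrow> (\<forall>u v. form M u v = - form M v u) \<and>
     (\<forall>u v w. form M (lie_bracket \<alpha> u v) w + form M (lie_bracket \<alpha> v w) u
              + form M (lie_bracket \<alpha> w u) v = 0)"
  unfolding cocycles2_def by simp

lemma subspace_Z: "subspace (cocycles2 \<alpha>)"
  unfolding subspace_def
proof (intro conjI allI impI ballI)
  show "0 \<in> cocycles2 \<alpha>" unfolding Z_iff by simp
next
  fix M N assume M: "M \<in> cocycles2 \<alpha>" and N: "N \<in> cocycles2 \<alpha>"
  have MA: "form M u v = - form M v u" for u v using M unfolding Z_iff by blast
  have NA: "form N u v = - form N v u" for u v using N unfolding Z_iff by blast
  have MC: "form M (lie_bracket \<alpha> u v) w + form M (lie_bracket \<alpha> v w) u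
              + form M (lie_bracket \<alpha> w u) v = 0" for u v w using M unfolding Z_iff by blast
  have NC: "form N (lie_bracket \<alpha> u v) w + form N (lie_bracket \<alpha> v w) u
              + form N (lie_bracket \<alpha> w u) v = 0" for u v w using N unfolding Z_iff by blast
  show "M + N \<in> cocycles2 \<alpha>"
    unfolding Z_iff form_add_matrix
  proof (intro conjI allI)
    fix u v show "form M u v + form N u v = - (form M v u + form N v u)"
      using MA[of u v] NA[of u v] by linarith
  next
    fix u v w
    show "form M (lie_bracket \<alpha> u v) w + form N (lie_bracket \<alpha> u v) w +
         (form M (lie_bracket \<alpha> v w) u + form N (lie_bracket \<alpha> v w) u) +
         (form M (lie_bracket \<alpha> w u) v + form N (lie_bracket \<alpha> w u) v) = 0"
      using MC[of u v w] NC[of u v w] by linarith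
  qed
next
  fix c :: real and M assume M: "M \<in> cocycles2 \<alpha>"
  have MA: "form M u v = - form M v u" for u v using M unfolding Z_iff by blast
  have MC: "form M (lie_bracket \<alpha> u v) w + form M (lie_bracket \<alpha> v w) u
              + form M (lie_bracket \<alpha> w u) v = 0" for u v w using M unfolding Z_iff by blast
  show "c *\<^sub>R M \<in> cocycles2 \<alpha>"
    unfolding Z_iff form_scale_matrix
  proof (intro conjI allI)
    fix u v show "c * form M u v = - (c * form M v u)"
      using MA[of u v] by simp
  next
    fix u v w
    have "c * (form M (lie_bracket \<alpha> u v) w + form M (lie_bracket \<alpha> v w) u
              + form M (lie_bracket \<alpha> w u) v) = 0" using MC[of u v w] by simp
    then show "c * form M (lie_bracket \<alpha> u v) w + c * form M (lie_bracket \<alpha> v w) u + c * form M (lie_bracket \<alpha> w u) v = 0"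
      by (simp add: distrib_left)
  qed
qed

lemma dim_plus1:
  fixes B Z :: "(real^8^8) set"
  assumes sB: "subspace B" and sZ: "subspace Z" and BZ: "B \<subseteq> Z" and M0Z: "M0 \<in> Z" and M0B: "M0 \<notin> B"
    and decomp: "\<And>M. M \<in> Z \<Longrightarrow> \<exists>c. M - c *\<^sub>R M0 \<in> B"
  shows "dim Z = dim B + 1"
proof -
  have "Z = span (insert M0 B)"
  proof
    show "Z \<subseteq> span (insert M0 B)"
    proof
      fix M assume "M \<in> Z"
      then obtain c where c: "M - c *\<^sub>R M0 \<in> B" using decomp by blast
      have "c *\<^sub>R M0 + (M - c *\<^sub>R M0) \<in> span (insert M0 B)"
        by (intro span_add span_scale span_base) (use c in auto)
      then show "M \<in> span (insert M0 B)" by simp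
    qed
    show "span (insert M0 B) \<subseteq> Z"
      using BZ M0Z sZ by (intro span_minimal) auto
  qed
  then have "dim Z = dim (insert M0 B)" by simp
  also have "\<dots> = dim B + 1"
  proof -
    have "M0 \<notin> span B" using M0B sB by (metis span_eq_iff)
    then show ?thesis by (simp add: dim_insert)
  qed
  finally show ?thesis .
qed

lemma Za:
  assumes "M \<in> cocycles2 \<alpha>" "i\<in>{1..8}" "j\<in>{1..8}"
  shows "M $ idx i $ idx j = - M $ idx j $ idx i"
  using assms form_XX[of i j M] form_XX[of j i M] unfolding Z_iff by metis

lemma Zc:
  assumes "M \<in> cocycles2 \<alpha>" "i\<in>{1..8}" "j\<in>{1..8}" "k\<in>{1..8}"
  shows "form M (basis_bracket \<alpha> i j) (X k) + form M (basis_bracket \<alpha> j k) (X i)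
     + form M (basis_bracket \<alpha> k i) (X j) = 0"
  using assms(1) lb_XX[OF assms(2,3), of \<alpha>] lb_XX[OF assms(3,4), of \<alpha>] lb_XX[OF assms(4,2), of \<alpha>]
  unfolding Z_iff by metis

lemma anti_rules:
  assumes "M \<in> cocycles2 \<alpha>"
  shows "M $ 0 $ 0 = 0"
    "M $ 1 $ 0 = - M $ 0 $ 1"
    "M $ 2 $ 0 = - M $ 0 $ 2"
    "M $ 3 $ 0 = - M $ 0 $ 3"
    "M $ 4 $ 0 = - M $ 0 $ 4"
    "M $ 5 $ 0 = - M $ 0 $ 5"
    "M $ 6 $ 0 = - M $ 0 $ 6"
    "M $ 7 $ 0 = - M $ 0 $ 7"
    "M $ 1 $ 1 = 0"
    "M $ 2 $ 1 = - M $ 1 $ 2"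
    "M $ 3 $ 1 = - M $ 1 $ 3"
    "M $ 4 $ 1 = - M $ 1 $ 4"
    "M $ 5 $ 1 = - M $ 1 $ 5"
    "M $ 6 $ 1 = - M $ 1 $ 6"
    "M $ 7 $ 1 = - M $ 1 $ 7"
    "M $ 2 $ 2 = 0"
    "M $ 3 $ 2 = - M $ 2 $ 3"
    "M $ 4 $ 2 = - M $ 2 $ 4"
    "M $ 5 $ 2 = - M $ 2 $ 5"
    "M $ 6 $ 2 = - M $ 2 $ 6"
    "M $ 7 $ 2 = - M $ 2 $ 7"
    "M $ 3 $ 3 = 0"
    "M $ 4 $ 3 = - M $ 3 $ 4"
    "M $ 5 $ 3 = - M $ 3 $ 5"
    "M $ 6 $ 3 = - M $ 3 $ 6"
    "M $ 7 $ 3 = - M $ 3 $ 7"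
    "M $ 4 $ 4 = 0"
    "M $ 5 $ 4 = - M $ 4 $ 5"
    "M $ 6 $ 4 = - M $ 4 $ 6"
    "M $ 7 $ 4 = - M $ 4 $ 7"
    "M $ 5 $ 5 = 0"
    "M $ 6 $ 5 = - M $ 5 $ 6"
    "M $ 7 $ 5 = - M $ 5 $ 7"
    "M $ 6 $ 6 = 0"
    "M $ 7 $ 6 = - M $ 6 $ 7"
    "M $ 7 $ 7 = 0"
  subgoal using Za[OF assms, of 1 1] by (simp add: in18)
  subgoal using Za[OF assms, of 2 1] by (simp add: in18)
  subgoal using Za[OF assms, of 3 1] by (simp add: in18)
  subgoal using Za[OF assms, of 4 1] by (simp add: in18)
  subgoal using Za[OF assms, of 5 1] by (simp add: in18)
  subgoal using Za[OF assms, of 6 1] by (simp add: in18)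
  subgoal using Za[OF assms, of 7 1] by (simp add: in18)
  subgoal using Za[OF assms, of 8 1] by (simp add: in18)
  subgoal using Za[OF assms, of 2 2] by (simp add: in18)
  subgoal using Za[OF assms, of 3 2] by (simp add: in18)
  subgoal using Za[OF assms, of 4 2] by (simp add: in18)
  subgoal using Za[OF assms, of 5 2] by (simp add: in18)
  subgoal using Za[OF assms, of 6 2] by (simp add: in18)
  subgoal using Za[OF assms, of 7 2] by (simp add: in18)
  subgoal using Za[OF assms, of 8 2] by (simp add: in18)
  subgoal using Za[OF assms, of 3 3] by (simp add: in18)
  subgoal using Za[OF assms, of 4 3] by (simp add: in18)
  subgoal using Za[OF assms, of 5 3] by (simp add: in18)
  subgoal using Za[OF assms, of 6 3] by (simp add: in18)
  subgoal using Za[OF assms, of 7 3] by (simp add: in18)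
  subgoal using Za[OF assms, of 8 3] by (simp add: in18)
  subgoal using Za[OF assms, of 4 4] by (simp add: in18)
  subgoal using Za[OF assms, of 5 4] by (simp add: in18)
  subgoal using Za[OF assms, of 6 4] by (simp add: in18)
  subgoal using Za[OF assms, of 7 4] by (simp add: in18)
  subgoal using Za[OF assms, of 8 4] by (simp add: in18)
  subgoal using Za[OF assms, of 5 5] by (simp add: in18)
  subgoal using Za[OF assms, of 6 5] by (simp add: in18)
  subgoal using Za[OF assms, of 7 5] by (simp add: in18)
  subgoal using Za[OF assms, of 8 5] by (simp add: in18)
  subgoal using Za[OF assms, of 6 6] by (simp add: in18)
  subgoal using Za[OF assms, of 7 6] by (simp add: in18)
  subgoal using Za[OF assms, of 8 6] by (simp add: in18)
  subgoal using Za[OF assms, of 7 7] by (simp add: in18)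
  subgoal using Za[OF assms, of 8 7] by (simp add: in18)
  subgoal using Za[OF assms, of 8 8] by (simp add: in18)
  done

lemma Z_eqs:
  assumes "M \<in> cocycles2 \<alpha>"
  shows "M $ 1 $ 4 = M $ 0 $ 3"
    "M $ 3 $ 7 = M $ 0 $ 3"
    "M $ 2 $ 3 = - M $ 0 $ 4"
    "M $ 4 $ 7 = - M $ 0 $ 4"
    "M $ 1 $ 6 = M $ 0 $ 5"
    "M $ 5 $ 7 = \<alpha> * M $ 0 $ 5"
    "M $ 2 $ 5 = - M $ 0 $ 6"
    "M $ 6 $ 7 = - (\<alpha> * M $ 0 $ 6)"
    "M $ 4 $ 5 = - M $ 3 $ 6"
    "M $ 1 $ 3 = 0"
    "M $ 1 $ 5 = 0"
    "M $ 1 $ 7 = 0"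
    "M $ 2 $ 4 = 0"
    "M $ 2 $ 6 = 0"
    "M $ 2 $ 7 = 0"
    "M $ 3 $ 5 = 0"
    "M $ 4 $ 6 = 0"
    "M $ 0 $ 7 = 0"
    "M $ 3 $ 4 = 0"
    "\<alpha> * M $ 3 $ 6 + M $ 3 $ 6 = 0"
    "\<alpha> * M $ 5 $ 6 = 0"
  subgoal using anti_rules[OF assms] Zc[OF assms, of 1 2 5] by (simp add: in18 form_XX algebra_simps, (linarith)?)
  subgoal using anti_rules[OF assms] Zc[OF assms, of 1 4 8] by (simp add: in18 form_XX algebra_simps, (linarith)?)
  subgoal using anti_rules[OF assms] Zc[OF assms, of 1 3 4] by (simp add: in18 form_XX algebra_simps, (linarith)?)
  subgoal using anti_rules[OF assms] Zc[OF assms, of 1 5 8] by (simp add: in18 form_XX algebra_simps, (linarith)?)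
  subgoal using anti_rules[OF assms] Zc[OF assms, of 1 2 7] by (simp add: in18 form_XX algebra_simps, (linarith)?)
  subgoal using anti_rules[OF assms] Zc[OF assms, of 1 6 8] by (simp add: in18 form_XX algebra_simps, (linarith)?)
  subgoal using anti_rules[OF assms] Zc[OF assms, of 1 3 6] by (simp add: in18 form_XX algebra_simps, (linarith)?)
  subgoal using anti_rules[OF assms] Zc[OF assms, of 1 7 8] by (simp add: in18 form_XX algebra_simps, (linarith)?)
  subgoal using anti_rules[OF assms] Zc[OF assms, of 2 5 7] by (simp add: in18 form_XX algebra_simps, (linarith)?)
  subgoal using anti_rules[OF assms] Zc[OF assms, of 1 2 4] by (simp add: in18 form_XX algebra_simps, (linarith)?)
  subgoal using anti_rules[OF assms] Zc[OF assms, of 1 2 6] by (simp add: in18 form_XX algebra_simps, (linarith)?)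
  subgoal using anti_rules[OF assms] Zc[OF assms, of 1 2 8] by (simp add: in18 form_XX algebra_simps, (linarith)?)
  subgoal using anti_rules[OF assms] Zc[OF assms, of 1 3 5] by (simp add: in18 form_XX algebra_simps, (linarith)?)
  subgoal using anti_rules[OF assms] Zc[OF assms, of 1 3 7] by (simp add: in18 form_XX algebra_simps, (linarith)?)
  subgoal using anti_rules[OF assms] Zc[OF assms, of 1 3 8] by (simp add: in18 form_XX algebra_simps, (linarith)?)
  subgoal using anti_rules[OF assms] Zc[OF assms, of 1 4 6] by (simp add: in18 form_XX algebra_simps, (linarith)?)
  subgoal using anti_rules[OF assms] Zc[OF assms, of 1 5 7] by (simp add: in18 form_XX algebra_simps, (linarith)?)
  subgoal using anti_rules[OF assms] Zc[OF assms, of 2 3 8] by (simp add: in18 form_XX algebra_simps, (linarith)?)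
  subgoal using anti_rules[OF assms] Zc[OF assms, of 4 5 8] by (simp add: in18 form_XX algebra_simps, (linarith)?)
  subgoal using anti_rules[OF assms] Zc[OF assms, of 4 7 8] by (simp add: in18 form_XX algebra_simps, (linarith)?)
  subgoal using anti_rules[OF assms] Zc[OF assms, of 6 7 8] by (simp add: in18 form_XX algebra_simps, (linarith)?)
  done


definition fof :: "real^8^8 \<Rightarrow> real^8" where
  "fof M = (\<chi> a::8. if a = 0 then M$1$2 else if a = 1 then M$0$1/2 else if a = 2 then -(M$0$2/2) else if a = 3 then M$0$3 else if a = 4 then - M$0$4 else if a = 5 then M$0$5 else if a = 6 then - M$0$6 else 0)"

definition M0m1 :: "real^8^8" where
  "M0m1 = (\<chi> a b::8. if a = 3 \<and> b = 6 then 1 else if a = 6 \<and> b = 3 then -1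
     else if a = 4 \<and> b = 5 then -1 else if a = 5 \<and> b = 4 then 1 else 0)"

definition M0z :: "real^8^8" where
  "M0z = (\<chi> a b::8. if a = 5 \<and> b = 6 then 1 else if a = 6 \<and> b = 5 then -1 else 0)"

lemma Z_sub_B_generic:
  assumes a0: "\<alpha> \<noteq> 0" and a1: "\<alpha> \<noteq> -1" and M: "M \<in> cocycles2 \<alpha>"
  shows "M \<in> coboundaries2 \<alpha>"
proof -
  note A = anti_rules[OF M] and E = Z_eqs[OF M]
  have "(\<alpha> + 1) * M$3$6 = 0" using E by (simp add: algebra_simps)
  moreover have "\<alpha> + 1 \<noteq> 0" using a1 by linarith
  ultimately have z47: "M$3$6 = 0" by simp
  have "\<alpha> * M$5$6 = 0" using E by simp
  then have z67: "M$5$6 = 0" using a0 by simp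
  show ?thesis
    apply (rule cob_basis[where f = "fof M"])
    unfolding set18 ball_simps
    using A E z47 z67 by (simp add: form_XX in18 fof_def)
qed

lemma M0m1_Z: "M0m1 \<in> cocycles2 (-1)"
proof (rule cocycle_basis)
  show "\<forall>i\<in>{1..8}. \<forall>j\<in>{1..8}. M0m1 $ idx i $ idx j = - M0m1 $ idx j $ idx i"
    unfolding set18 ball_simps by (simp add: M0m1_def)
  show "\<forall>i\<in>{1..8}. \<forall>j\<in>{1..8}. \<forall>k\<in>{1..8}.
     form M0m1 (basis_bracket (-1) i j) (X k) + form M0m1 (basis_bracket (-1) j k) (X i)
     + form M0m1 (basis_bracket (-1) k i) (X j) = 0"
    unfolding set18 ball_simps by (simp add: M0m1_def form_XX in18)
qed

lemma M0z_Z: "M0z \<in> cocycles2 0"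
proof (rule cocycle_basis)
  show "\<forall>i\<in>{1..8}. \<forall>j\<in>{1..8}. M0z $ idx i $ idx j = - M0z $ idx j $ idx i"
    unfolding set18 ball_simps by (simp add: M0z_def)
  show "\<forall>i\<in>{1..8}. \<forall>j\<in>{1..8}. \<forall>k\<in>{1..8}.
     form M0z (basis_bracket 0 i j) (X k) + form M0z (basis_bracket 0 j k) (X i)
     + form M0z (basis_bracket 0 k i) (X j) = 0"
    unfolding set18 ball_simps by (simp add: M0z_def form_XX in18)
qed

lemma M0m1_notB: "M0m1 \<notin> coboundaries2 (-1)"
proof
  assume "M0m1 \<in> coboundaries2 (-1)"
  then obtain f where h: "\<And>u v. form M0m1 u v = f \<bullet> lie_bracket (-1) u v"
    unfolding coboundaries2_def by blast
  have "form M0m1 (X 4) (X 7) = 1" by (simp add: form_XX in18 M0m1_def)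
  moreover have "f \<bullet> lie_bracket (-1) (X 4) (X 7) = 0" by (simp add: lb_XX in18)
  ultimately show False using h by simp
qed

lemma M0z_notB: "M0z \<notin> coboundaries2 0"
proof
  assume "M0z \<in> coboundaries2 0"
  then obtain f where h: "\<And>u v. form M0z u v = f \<bullet> lie_bracket 0 u v"
    unfolding coboundaries2_def by blast
  have "form M0z (X 6) (X 7) = 1" by (simp add: form_XX in18 M0z_def)
  moreover have "f \<bullet> lie_bracket 0 (X 6) (X 7) = 0" by (simp add: lb_XX in18)
  ultimately show False using h by simp
qed

lemma decomp_m1:
  assumes M: "M \<in> cocycles2 (-1)"
  shows "M - (M$3$6) *\<^sub>R M0m1 \<in> coboundaries2 (-1)"
proof -
  note A = anti_rules[OF M] and E = Z_eqs[OF M]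
  show ?thesis
    apply (rule cob_basis[where f = "fof M"])
    unfolding set18 ball_simps
    using A E by (simp add: form_XX in18 fof_def M0m1_def)
qed

lemma decomp_z:
  assumes M: "M \<in> cocycles2 0"
  shows "M - (M$5$6) *\<^sub>R M0z \<in> coboundaries2 0"
proof -
  note A = anti_rules[OF M] and E = Z_eqs[OF M]
  show ?thesis
    apply (rule cob_basis[where f = "fof M"])
    unfolding set18 ball_simps
    using A E by (simp add: form_XX in18 fof_def M0z_def)
qed

lemma b2_generic: "\<alpha> \<noteq> 0 \<Longrightarrow> \<alpha> \<noteq> -1 \<Longrightarrow> b2 \<alpha> = 0"
  unfolding b2_def using B_sub_Z[of \<alpha>] Z_sub_B_generic[of \<alpha>]
  by (metis diff_self_eq_0 subsetI subset_antisym)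

lemma b2_m1: "b2 (-1) = 1"
proof -
  have "dim (cocycles2 (-1)) = dim (coboundaries2 (-1)) + 1"
    by (rule dim_plus1[OF subspace_B subspace_Z B_sub_Z M0m1_Z M0m1_notB])
       (use decomp_m1 in blast)
  then show ?thesis unfolding b2_def by simp
qed

lemma b2_0: "b2 0 = 1"
proof -
  have "dim (cocycles2 0) = dim (coboundaries2 0) + 1"
    by (rule dim_plus1[OF subspace_B subspace_Z B_sub_Z M0z_Z M0z_notB])
       (use decomp_z in blast)
  then show ?thesis unfolding b2_def by simp
qed

theorem proposition3:
  shows "(\<forall>\<alpha>::real. -1 \<le> \<alpha> \<and> \<alpha> \<le> 1 \<and> \<alpha> \<noteq> -1 \<and> \<alpha> \<noteq> 0 \<longrightarrow>
            b2 \<alpha> + 1 = b2 (-1))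
       \<and> (\<forall>\<alpha>::real. \<forall>\<beta>::real. -1 \<le> \<alpha> \<and> \<alpha> \<le> 1 \<and> \<alpha> \<noteq> -1 \<and> \<alpha> \<noteq> 0
            \<and> \<beta> \<in> {0, -1} \<longrightarrow> b2 \<beta> = b2 \<alpha> + 1)
       \<and> b2 0 = b2 (-1)"
  using b2_generic b2_m1 b2_0 by auto

end
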